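(* Let $d\ge 2$ and let $K$ be a finite shellable pure $d$-dimensional abstract simplicial complex whose dual graph is a path graph. Then the 1-skeleton graph of $K$ is Hamiltonian.
   Context: A finite abstract simplicial complex is a finite set of nonempty finite sets closed under taking nonempty subsets; its facets are its maximal sets, and it is pure of dimension $d$ if all facets have $d+1$ elements. It is shellable if there is an ordering $x_1,\dots,x_n$ of its facets such that for every $k\ge 2$ the intersection of the complex generated by $x_k$ with the complex generated by $x_1,\dots,x_{k-1}$ is a shellable pure $(d-1)$-dimensional complex (the complex generated by a collection of sets is the set of all their nonempty subsets). The dual graph has the facets as vertices, two distinct facets being adjacent if they intersect in a $(d-1)$-simplex (a set of $d$ elements). The 1-skeleton graph has vertices the one-element sets and edges the two-element sets; it is Hamiltonian if it has a closed simple cycle through every vertex exactly once. *)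

theory Defs
  imports Main
begin

definition simplicial_complex :: "'a set set \<Rightarrow> bool" where
  "simplicial_complex K \<longleftrightarrow> finite K \<and>
     (\<forall>s\<in>K. s \<noteq> {} \<and> finite s \<and> (\<forall>t. t \<subseteq> s \<and> t \<noteq> {} \<longrightarrow> t \<in> K))"

definition generated :: "'a set set \<Rightarrow> 'a set set" where
  "generated S = {t. t \<noteq> {} \<and> (\<exists>s\<in>S. t \<subseteq> s)}"

definition facets :: "'a set set \<Rightarrow> 'a set set" where
  "facets K = {s\<in>K. \<not> (\<exists>t\<in>K. s \<subset> t)}"

definition pure :: "nat \<Rightarrow> 'a set set \<Rightarrow> bool" where
  "pure d K \<longleftrightarrow> K \<noteq> {} \<and> (\<forall>s\<in>facets K. card s = d + 1)"

text \<open>For d = 0 the intersection condition is the empty ((-1)-dimensional) complex,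
which is regarded as shellable, so every 0-dimensional complex is shellable.\<close>
inductive shellable :: "nat \<Rightarrow> 'a set set \<Rightarrow> bool" where
  "\<lbrakk> pure d K; distinct xs; set xs = facets K;
     \<forall>k. 0 < k \<and> k < length xs \<longrightarrow>
        (d = 0 \<or> shellable (d - 1)
            (generated {xs ! k} \<inter> generated (set (take k xs)))) \<rbrakk>
   \<Longrightarrow> shellable d K"

definition dual_adj :: "nat \<Rightarrow> 'a set \<Rightarrow> 'a set \<Rightarrow> bool" where
  "dual_adj d F G \<longleftrightarrow> F \<noteq> G \<and> card (F \<inter> G) = d"

definition dual_graph_is_path :: "nat \<Rightarrow> 'a set set \<Rightarrow> bool" where
  "dual_graph_is_path d K \<longleftrightarrow> (\<exists>xs. distinct xs \<and> set xs = facets K \<and>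
     (\<forall>i j. i < length xs \<and> j < length xs \<longrightarrow>
        (dual_adj d (xs ! i) (xs ! j) \<longleftrightarrow> (i = Suc j \<or> j = Suc i))))"

definition skeleton_vertices :: "'a set set \<Rightarrow> 'a set" where
  "skeleton_vertices K = {v. {v} \<in> K}"

definition skeleton_hamiltonian :: "'a set set \<Rightarrow> bool" where
  "skeleton_hamiltonian K \<longleftrightarrow> (\<exists>vs. distinct vs \<and> set vs = skeleton_vertices K \<and>
     length vs \<ge> 3 \<and>
     (\<forall>i < length vs. {vs ! i, vs ! ((i + 1) mod length vs)} \<in> K))"

end

theory Submission
  imports Defs
begin


lemma below_facet:
  assumes "finite K" "s \<in> K"
  shows "\<exists>t\<in>facets K. s \<subseteq> t"
proof -
  obtain m where "m \<in> K" "s \<subseteq> m" "\<forall>b\<in>K. m \<subseteq> b \<longrightarrow> m = b"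
    using finite_has_maximal2[OF assms] by blast
  then show ?thesis unfolding facets_def by blast
qed

lemma card_int_le:
  assumes "finite A" "finite B" "card A = Suc d" "card B = Suc d" "A \<noteq> B"
  shows "card (A \<inter> B) \<le> d"
proof (rule ccontr)
  assume "\<not> ?thesis"
  hence c: "card (A \<inter> B) \<ge> Suc d" by simp
  have "A \<inter> B = A" using card_subset_eq[of A "A \<inter> B"] assms c card_mono[of A "A\<inter>B"]
    by (metis Int_lower1 card_mono le_antisym)
  moreover have "A \<inter> B = B" using assms c
    by (metis Int_lower2 card_mono card_subset_eq le_antisym)
  ultimately show False using assms by simp
qed

lemma card_step:
  assumes "finite A" "finite B" "card A = Suc d" "card B = Suc d" "card (A \<inter> B) = d"
  shows "\<exists>a b. a \<in> A \<and> b \<notin> A \<and> B = insert b (A - {a})"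
proof -
  have "card (A - B) = 1" using assms card_Diff_subset_Int[of A B] by simp
  then obtain a where a: "A - B = {a}" by (rule card_1_singletonE)
  have cBA: "B \<inter> A = A \<inter> B" by blast
  have "card (B - A) = 1" using assms card_Diff_subset_Int[of B A] by (simp add: cBA)
  then obtain b where b: "B - A = {b}" by (rule card_1_singletonE)
  have "B = insert b (A - {a})" using a b by blast
  thus ?thesis using a b by blast
qed

lemma card_three:
  assumes "finite X0" "finite X1" "finite X2"
    "card X0 = Suc d" "card X1 = Suc d" "card X2 = Suc d"
    "card (X0 \<inter> X1) = d" "card (X1 \<inter> X2) = d" "X0 \<noteq> X2"
    "v \<in> X1" "v \<notin> X0" "v \<notin> X2"
  shows "card (X0 \<inter> X2) = d"
proof -
  have c10: "X1 \<inter> X0 = X0 \<inter> X1" by blast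
  have "card (X1 - X0) = 1" using assms card_Diff_subset_Int[of X1 X0] by (simp add: c10)
  then obtain x where "X1 - X0 = {x}" by (rule card_1_singletonE)
  hence e1: "X1 - X0 = {v}" using assms(10,11) by auto
  have "card (X1 - X2) = 1" using assms card_Diff_subset_Int[of X1 X2] by simp
  then obtain y where "X1 - X2 = {y}" by (rule card_1_singletonE)
  hence e2: "X1 - X2 = {v}" using assms(10,12) by auto
  have "X1 - {v} \<subseteq> X0 \<inter> X2" using e1 e2 by blast
  hence "card (X1 - {v}) \<le> card (X0 \<inter> X2)" using assms(1) by (intro card_mono) auto
  hence "d \<le> card (X0 \<inter> X2)" using assms(2,5,10) by simp
  moreover have "card (X0 \<inter> X2) \<le> d" using card_int_le[OF assms(1,3,4,6,9)] .
  ultimately show ?thesis by simp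
qed

definition cpairs :: "'a list \<Rightarrow> ('a \<times> 'a) set" where
  "cpairs vs = {(vs!j, vs!(Suc j mod length vs)) | j. j < length vs}"

lemma cp_mem: "j < length vs \<Longrightarrow> (vs!j, vs!(Suc j mod length vs)) \<in> cpairs vs"
  unfolding cpairs_def by blast

lemma cpairs_insert:
  assumes "(u,w) \<in> cpairs vs" "b \<notin> set vs" "distinct vs"
  shows "\<exists>ys. distinct ys \<and> set ys = insert b (set vs) \<and> length ys = Suc (length vs) \<and>
     cpairs ys \<subseteq> cpairs vs \<union> {(u,b),(b,w)} \<and> (u,b) \<in> cpairs ys \<and> (b,w) \<in> cpairs ys"
proof -
  obtain i where i: "i < length vs" "u = vs!i" "w = vs!(Suc i mod length vs)"
    using assms(1) unfolding cpairs_def by blast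
  define L where "L = length vs"
  define ys where "ys = take (Suc i) vs @ b # drop (Suc i) vs"
  have len: "length ys = Suc L" using i unfolding ys_def L_def by simp
  have y1: "ys!j = vs!j" if "j \<le> i" for j using that i unfolding ys_def by (simp add: nth_append)
  have y2: "ys!(Suc i) = b" using i unfolding ys_def by (simp add: nth_append)
  have y3: "ys!j = vs!(j - 1)" if "Suc i < j" "j \<le> L" for j
  proof -
    have e: "Suc (j-2) = j-1" using that by simp
    show ?thesis using that i unfolding ys_def L_def by (simp add: nth_append e)
  qed
  have set: "set ys = insert b (set vs)"
  proof -
    have "set ys = insert b (set (take (Suc i) vs) \<union> set (drop (Suc i) vs))" unfolding ys_def by simp
    also have "set (take (Suc i) vs) \<union> set (drop (Suc i) vs) = set vs"
      by (metis append_take_drop_id set_append)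
    finally show ?thesis .
  qed
  have d0: "distinct (take (Suc i) vs @ drop (Suc i) vs)" using assms(3) by simp
  have "b \<notin> set (take (Suc i) vs)" "b \<notin> set (drop (Suc i) vs)"
    using assms(2) by (meson in_set_takeD, meson in_set_dropD)
  moreover have "set (take (Suc i) vs) \<inter> set (drop (Suc i) vs) = {}"
    using set_take_disj_set_drop_if_distinct[OF assms(3)] by blast
  moreover have "distinct (take (Suc i) vs)" "distinct (drop (Suc i) vs)" using assms(3) by auto
  ultimately have dis: "distinct ys" unfolding ys_def by auto
  have p1: "(u,b) \<in> cpairs ys"
    using i y1[of i] y2 len L_def cp_mem[of i ys] by simp
  have p2: "(b,w) \<in> cpairs ys"
  proof (cases "Suc i < L")
    case True
    then show ?thesis using i y2 y3[of "Suc (Suc i)"] len L_def cp_mem[of "Suc i" ys] by simp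
  next
    case False
    hence "Suc i = L" using i L_def by simp
    then show ?thesis using i y2 y1[of 0] len L_def cp_mem[of "Suc i" ys] by simp
  qed
  have sub: "cpairs ys \<subseteq> cpairs vs \<union> {(u,b),(b,w)}"
  proof
    fix p assume "p \<in> cpairs ys"
    then obtain j where j: "j < Suc L" "p = (ys!j, ys!(Suc j mod Suc L))"
      unfolding cpairs_def using len by auto
    consider "j < i" | "j = i" | "j = Suc i" | "Suc i < j" "j < L" | "Suc i < j" "j = L"
      using j by linarith
    then show "p \<in> cpairs vs \<union> {(u,b),(b,w)}"
    proof cases
      case 1
      then have "p = (vs!j, vs!(Suc j mod L))" using j y1[of j] y1[of "Suc j"] i L_def by simp
      then show ?thesis using 1 i L_def cp_mem[of j vs] by simp
    next
      case 2 then show ?thesis using j y1[of i] y2 i L_def by simp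
    next
      case 3
      show ?thesis
      proof (cases "Suc i < L")
        case True
        then show ?thesis using 3 j y2 y3[of "Suc (Suc i)"] i L_def by simp
      next
        case False
        hence "Suc i = L" using i L_def by simp
        then show ?thesis using 3 j y2 y1[of 0] i L_def by simp
      qed
    next
      case 4
      then have "p = (vs!(j-1), vs!(Suc (j-1) mod L))" using j y3[of j] y3[of "Suc j"] by simp
      then show ?thesis using 4 L_def cp_mem[of "j-1" vs] by simp
    next
      case 5
      then have "p = (vs!(j-1), vs!(Suc (j-1) mod L))" using j y3[of j] y1[of 0] i by simp
      then show ?thesis using 5 L_def cp_mem[of "j-1" vs] by simp
    qed
  qed
  show ?thesis
    apply (rule exI[of _ ys])
    using dis set len sub p1 p2 unfolding L_def by simp
qed


lemma take_mem: assumes "p < k" "k \<le> length ys" shows "ys!p \<in> set (take k ys)"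
proof -
  have "p < length (take k ys)" using assms by simp
  moreover have "take k ys ! p = ys ! p" using assms by simp
  ultimately show ?thesis by (metis nth_mem)
qed
lemma take_memD: assumes "x \<in> set (take k ys)" shows "\<exists>p<k. p < length ys \<and> x = ys!p"
proof -
  obtain p where p: "p < length (take k ys)" "take k ys ! p = x" using assms by (auto simp: in_set_conv_nth)
  then have "p < k" "p < length ys" "x = ys!p" by auto
  then show ?thesis by blast
qed
lemma not_take_mem: assumes "distinct ys" "j < length ys" shows "ys!j \<notin> set (take j ys)"
proof
  assume "ys!j \<in> set (take j ys)"
  from take_memD[OF this] obtain p where p: "p < j" "p < length ys" "ys!j = ys!p" by blast
  have "j = p" using nth_eq_iff_index_eq[OF assms p(2)] p(3) by simp
  then show False using p(1) by simp
qed

lemma shell_props: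
  assumes d1: "d \<ge> 1" and sc: "simplicial_complex K" and sh: "shellable d K"
  shows "\<exists>ys. distinct ys \<and> set ys = facets K \<and>
    (\<forall>k. 0 < k \<and> k < length ys \<longrightarrow> (\<exists>j<k. card (ys!j \<inter> ys!k) = d)) \<and>
    (\<forall>k j. 0 < k \<and> k < length ys \<and> j < k \<and> ys!j \<inter> ys!k \<noteq> {} \<longrightarrow>
        (\<exists>j'<k. ys!j \<inter> ys!k \<subseteq> ys!j' \<and> card (ys!j' \<inter> ys!k) = d))"
proof -
  obtain ys where pu: "pure d K" and yd: "distinct ys" and ys: "set ys = facets K"
    and sh2: "\<forall>k. 0 < k \<and> k < length ys \<longrightarrow> (d = 0 \<or> shellable (d - 1)
            (generated {ys ! k} \<inter> generated (set (take k ys))))"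
    using sh by (cases rule: shellable.cases) blast
  have fK: "\<And>F. F \<in> facets K \<Longrightarrow> finite F \<and> card F = Suc d"
    using sc pu unfolding simplicial_complex_def pure_def facets_def by auto
  have key: "\<exists>j'<k. t \<subseteq> ys!j' \<and> card (ys!j' \<inter> ys!k) = d"
    if k: "0 < k" "k < length ys" and t: "t \<in> facets (generated {ys ! k} \<inter> generated (set (take k ys)))" for k t
  proof -
    define C where "C = generated {ys ! k} \<inter> generated (set (take k ys))"
    have "shellable (d - 1) C" using sh2 k d1 unfolding C_def by auto
    then have pC: "pure (d - 1) C" by (cases rule: shellable.cases) blast
    have tC: "t \<in> C" "card t = Suc (d - 1)" using t pC unfolding C_def[symmetric] pure_def facets_def by auto
    then have ct: "card t = d" using d1 by simp
    from tC(1) have "t \<subseteq> ys!k" unfolding C_def generated_def by auto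
    moreover from tC(1) obtain s where "s \<in> set (take k ys)" "t \<subseteq> s" unfolding C_def generated_def by auto
    then obtain j' where j': "j' < k" "t \<subseteq> ys!j'" using take_memD[OF \<open>s \<in> set (take k ys)\<close>] by blast
    have yk: "ys!k \<in> facets K" "ys!j' \<in> facets K" using k j' ys by auto
    have ne: "ys!j' \<noteq> ys!k" using j' k nth_eq_iff_index_eq[OF yd, of j' k] by simp
    have "card (ys!j' \<inter> ys!k) \<le> d" using fK[OF yk(2)] fK[OF yk(1)] ne card_int_le[of "ys!j'" "ys!k" d] by blast
    moreover have "card t \<le> card (ys!j' \<inter> ys!k)"
      using calculation j' \<open>t \<subseteq> ys!k\<close> fK[OF yk(1)] by (intro card_mono) auto
    ultimately show ?thesis using j' ct by auto
  qed
  have finC: "finite (generated {ys ! k} \<inter> generated (set (take k ys)))" if "k < length ys" for k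
  proof -
    have "ys!k \<in> facets K" using that ys by auto
    from fK[OF this] have "finite (ys!k)" by blast
    moreover have "generated {ys ! k} \<inter> generated (set (take k ys)) \<subseteq> Pow (ys!k)"
      unfolding generated_def by auto
    ultimately show ?thesis by (meson finite_Pow_iff finite_subset)
  qed
  have P1: "\<exists>j<k. card (ys!j \<inter> ys!k) = d" if k: "0 < k" "k < length ys" for k
  proof -
    define C where "C = generated {ys ! k} \<inter> generated (set (take k ys))"
    have "shellable (d - 1) C" using sh2 k d1 unfolding C_def by auto
    then have "pure (d - 1) C" by (cases rule: shellable.cases) blast
    then obtain s where "s \<in> C" unfolding pure_def by blast
    then obtain t where "t \<in> facets C" using below_facet[OF finC[OF k(2)], of s] unfolding C_def by blast
    then show ?thesis using key[OF k, of t] unfolding C_def by blast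
  qed
  have P2: "\<exists>j'<k. ys!j \<inter> ys!k \<subseteq> ys!j' \<and> card (ys!j' \<inter> ys!k) = d"
    if k: "0 < k" "k < length ys" "j < k" "ys!j \<inter> ys!k \<noteq> {}" for k j
  proof -
    define C where "C = generated {ys ! k} \<inter> generated (set (take k ys))"
    have "ys!j \<in> set (take k ys)" using take_mem[of j k ys] k by simp
    hence "ys!j \<inter> ys!k \<in> C" using k(4) unfolding C_def generated_def by blast
    then obtain t where "t \<in> facets C" "ys!j \<inter> ys!k \<subseteq> t"
      using below_facet[OF finC[OF k(2)], of "ys!j \<inter> ys!k"] unfolding C_def by blast
    then show ?thesis using key[OF k(1,2), of t] unfolding C_def by blast
  qed
  show ?thesis
    apply (rule exI[of _ ys])
    using yd ys P1 P2 by simp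
qed



context
  fixes K :: "'a set set" and d :: nat and xs ys :: "'a set list"
  assumes d2: "d \<ge> 2" and sc: "simplicial_complex K" and pu: "pure d K"
    and xd: "distinct xs" and xs: "set xs = facets K"
    and xadj: "\<forall>i j. i < length xs \<and> j < length xs \<longrightarrow>
        (dual_adj d (xs ! i) (xs ! j) \<longleftrightarrow> (i = Suc j \<or> j = Suc i))"
    and yd: "distinct ys" and ys: "set ys = facets K"
    and P1: "\<forall>k. 0 < k \<and> k < length ys \<longrightarrow> (\<exists>j<k. card (ys!j \<inter> ys!k) = d)"
    and P2: "\<forall>k j. 0 < k \<and> k < length ys \<and> j < k \<and> ys!j \<inter> ys!k \<noteq> {} \<longrightarrow>
        (\<exists>j'<k. ys!j \<inter> ys!k \<subseteq> ys!j' \<and> card (ys!j' \<inter> ys!k) = d)"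
begin

lemma fK: "F \<in> facets K \<Longrightarrow> finite F \<and> card F = Suc d"
  using sc pu unfolding simplicial_complex_def pure_def facets_def by auto

lemma xcard: "l < length xs \<Longrightarrow> finite (xs!l) \<and> card (xs!l) = Suc d"
  using fK xs nth_mem by blast

lemma adj_iff:
  assumes "a < length xs" "b < length xs"
  shows "card (xs!a \<inter> xs!b) = d \<longleftrightarrow> (a = Suc b \<or> b = Suc a)"
proof
  assume c: "card (xs!a \<inter> xs!b) = d"
  have "xs!a \<noteq> xs!b" using c xcard[OF assms(1)] by auto
  hence "dual_adj d (xs!a) (xs!b)" using c unfolding dual_adj_def by simp
  thus "a = Suc b \<or> b = Suc a" using xadj assms by blast
next
  assume "a = Suc b \<or> b = Suc a"
  hence "dual_adj d (xs!a) (xs!b)" using xadj assms by blast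
  thus "card (xs!a \<inter> xs!b) = d" unfolding dual_adj_def by simp
qed

lemma len_eq: "length ys = length xs"
  using distinct_card[OF xd] distinct_card[OF yd] xs ys by simp

lemma y_to_x: "j < length ys \<Longrightarrow> \<exists>l<length xs. ys!j = xs!l"
proof -
  assume "j < length ys"
  hence "ys!j \<in> set xs" using xs ys nth_mem by metis
  thus ?thesis by (simp add: in_set_conv_nth) (metis)
qed

lemma x_to_y: "l < length xs \<Longrightarrow> \<exists>p<length ys. xs!l = ys!p"
proof -
  assume "l < length xs"
  hence "xs!l \<in> set ys" using xs ys nth_mem by metis
  thus ?thesis by (simp add: in_set_conv_nth) (metis)
qed

lemma x_inj: "a < length xs \<Longrightarrow> b < length xs \<Longrightarrow> xs!a = xs!b \<longleftrightarrow> a = b"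
  using nth_eq_iff_index_eq[OF xd] by blast

definition Sx :: "nat \<Rightarrow> nat set" where
  "Sx k = {l. l < length xs \<and> xs!l \<in> set (take k ys)}"

lemma S_interval: "1 \<le> k \<Longrightarrow> k \<le> length ys \<Longrightarrow> \<exists>a b. Sx k = {a..b}"
proof (induction k)
  case 0 then show ?case by simp
next
  case (Suc k)
  obtain l' where l': "l' < length xs" "ys!k = xs!l'" using y_to_x[of k] Suc.prems by auto
  have tk: "set (take (Suc k) ys) = insert (ys!k) (set (take k ys))"
    using Suc.prems by (simp add: take_Suc_conv_app_nth)
  have SS: "Sx (Suc k) = insert l' (Sx k)"
    unfolding Sx_def tk using l' x_inj by auto
  show ?case
  proof (cases "k = 0")
    case True
    then have "Sx (Suc k) = {l'..l'}" using SS unfolding Sx_def by simp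
    then show ?thesis by blast
  next
    case False
    then obtain a b where ab: "Sx k = {a..b}" using Suc by auto
    have nin: "l' \<notin> Sx k" using not_take_mem[OF yd, of k] Suc.prems l' unfolding Sx_def by auto
    obtain j where j: "j < k" "card (ys!j \<inter> ys!k) = d" using P1 False Suc.prems by auto
    obtain l where l: "l < length xs" "ys!j = xs!l" using y_to_x[of j] j Suc.prems by auto
    have lS: "l \<in> Sx k" using l j take_mem[of j k ys] Suc.prems unfolding Sx_def by auto
    have "l' = Suc l \<or> l = Suc l'" using adj_iff[OF l(1) l'(1)] j l l' by auto
    then show ?thesis
    proof
      assume "l' = Suc l"
      then have "l' = Suc b" using lS nin ab by auto
      then have "Sx (Suc k) = {a..Suc b}" using SS ab lS by (auto simp: le_Suc_eq)
      then show ?thesis by blast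
    next
      assume "l = Suc l'"
      then have "l = a" using lS nin ab by auto
      then have "Sx (Suc k) = {l'..b}" using SS ab lS \<open>l = Suc l'\<close> by auto
      then show ?thesis by blast
    qed
  qed
qed


lemma Sx_mem: "p < k \<Longrightarrow> k \<le> length ys \<Longrightarrow> l < length xs \<Longrightarrow> xs!l = ys!p \<Longrightarrow> l \<in> Sx k"
  unfolding Sx_def using take_mem[of p k ys] by simp

lemma Sx_nmem: "k < length ys \<Longrightarrow> xs!l = ys!k \<Longrightarrow> l \<notin> Sx k"
  unfolding Sx_def using not_take_mem[OF yd, of k] by simp

lemma vint:
  "i < length xs \<Longrightarrow> j < length xs \<Longrightarrow> i \<le> j \<Longrightarrow> v \<in> xs!i \<Longrightarrow> v \<in> xs!j \<Longrightarrow> i \<le> k \<Longrightarrow> k \<le> j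
   \<Longrightarrow> v \<in> xs!k"
proof (induction "j - i" arbitrary: i j rule: less_induct)
  case less
  show ?case
  proof (cases "j \<le> Suc i")
    case True
    then have "k = i \<or> k = j" using less.prems by auto
    then show ?thesis using less.prems by auto
  next
    case False
    obtain p where p: "p < length ys" "xs!i = ys!p" using x_to_y[of i] less.prems by auto
    obtain q where q: "q < length ys" "xs!j = ys!q" using x_to_y[of j] less.prems by auto
    have "p \<noteq> q" using p q x_inj[of i j] less.prems False by auto
    then consider "p < q" | "q < p" by linarith
    then show ?thesis
    proof cases
      case 1
      have "ys!p \<inter> ys!q \<noteq> {}" using p q less.prems by auto
      then obtain j' where j': "j' < q" "ys!p \<inter> ys!q \<subseteq> ys!j'" "card (ys!j' \<inter> ys!q) = d"
        using P2[rule_format, of q p] 1 q by auto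
      obtain l where l: "l < length xs" "ys!j' = xs!l" using y_to_x[of j'] j' q by auto
      have "l = Suc j \<or> j = Suc l" using adj_iff[OF l(1) less.prems(2)] j' l q by auto
      obtain a b where ab: "Sx q = {a..b}" using S_interval[of q] 1 q by auto
      have iS: "i \<in> Sx q" using Sx_mem[of p q i] 1 q p less.prems by simp
      have lS: "l \<in> Sx q" using Sx_mem[of j' q l] j' q l by simp
      have jS: "j \<notin> Sx q" using Sx_nmem[of q j] q by simp
      have jl: "j = Suc l"
      proof (rule ccontr)
        assume "j \<noteq> Suc l"
        then have "l = Suc j" using \<open>l = Suc j \<or> j = Suc l\<close> by simp
        then show False using iS lS jS ab less.prems by auto
      qed
      have vl: "v \<in> xs!l" using j' l p q less.prems by auto
      show ?thesis
      proof (cases "k = j")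
        case True then show ?thesis using less.prems by simp
      next
        case False
        then have "k \<le> l" using jl less.prems by simp
        moreover have "i \<le> l" using jl less.prems \<open>\<not> j \<le> Suc i\<close> by simp
        ultimately show ?thesis using less.hyps[of l i] jl less.prems l vl by auto
      qed
    next
      case 2
      have "ys!q \<inter> ys!p \<noteq> {}" using p q less.prems by auto
      then obtain j' where j': "j' < p" "ys!q \<inter> ys!p \<subseteq> ys!j'" "card (ys!j' \<inter> ys!p) = d"
        using P2[rule_format, of p q] 2 p by auto
      obtain l where l: "l < length xs" "ys!j' = xs!l" using y_to_x[of j'] j' p by auto
      have "l = Suc i \<or> i = Suc l" using adj_iff[OF l(1) less.prems(1)] j' l p by auto
      obtain a b where ab: "Sx p = {a..b}" using S_interval[of p] 2 p by auto
      have jS: "j \<in> Sx p" using Sx_mem[of q p j] 2 q p less.prems by simp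
      have lS: "l \<in> Sx p" using Sx_mem[of j' p l] j' p l by simp
      have iS: "i \<notin> Sx p" using Sx_nmem[of p i] p by simp
      have il: "l = Suc i"
      proof (rule ccontr)
        assume "l \<noteq> Suc i"
        then have "i = Suc l" using \<open>l = Suc i \<or> i = Suc l\<close> by simp
        then show False using iS lS jS ab less.prems by auto
      qed
      have vl: "v \<in> xs!l" using j' l p q less.prems by auto
      show ?thesis
      proof (cases "k = i")
        case True then show ?thesis using less.prems by simp
      next
        case False
        then have "l \<le> k" using il less.prems by simp
        moreover have "l \<le> j" using il less.prems \<open>\<not> j \<le> Suc i\<close> by simp
        ultimately show ?thesis using less.hyps[of j l] il less.prems l vl by auto
      qed
    qed
  qed
qed


lemma base_cycle:
  assumes "finite X" "card X = Suc d"
  shows "\<exists>vs. distinct vs \<and> set vs = X \<and> length vs \<ge> 3 \<and>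
     (\<forall>x\<in>X. \<exists>p q. (p,q) \<in> cpairs vs \<and> p \<noteq> q \<and> p \<in> X - {x} \<and> q \<in> X - {x})"
proof -
  obtain vs where vs: "set vs = X" "distinct vs" using finite_distinct_list[OF assms(1)] by blast
  define L where "L = length vs"
  have L: "L = Suc d" using distinct_card[OF vs(2)] vs(1) assms(2) L_def by simp
  hence L3: "L \<ge> 3" using d2 by simp
  have inj: "\<And>a b. a < L \<Longrightarrow> b < L \<Longrightarrow> vs!a = vs!b \<longleftrightarrow> a = b"
    using nth_eq_iff_index_eq[OF vs(2)] L_def by blast
  have mem: "\<And>a. a < L \<Longrightarrow> vs!a \<in> X" using vs(1) L_def nth_mem by blast
  have cp: "\<And>a. a < L \<Longrightarrow> (vs!a, vs!(Suc a mod L)) \<in> cpairs vs" using cp_mem L_def by blast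
  have "\<exists>p q. (p,q) \<in> cpairs vs \<and> p \<noteq> q \<and> p \<in> X - {x} \<and> q \<in> X - {x}" if x: "x \<in> X" for x
  proof -
    consider "x \<noteq> vs!0 \<and> x \<noteq> vs!1" | "x = vs!0" | "x = vs!1" by blast
    then show ?thesis
    proof cases
      case 1
      have "(vs!0, vs!1) \<in> cpairs vs" using cp[of 0] L3 by simp
      moreover have "vs!0 \<noteq> vs!1" using inj[of 0 1] L3 by simp
      ultimately show ?thesis using 1 mem[of 0] mem[of 1] L3 by auto
    next
      case 2
      have "(vs!1, vs!2) \<in> cpairs vs" using cp[of 1] L3 by (simp add: numeral_2_eq_2)
      moreover have "vs!1 \<noteq> vs!2" "vs!1 \<noteq> vs!0" "vs!2 \<noteq> vs!0"
        using inj[of 1 2] inj[of 1 0] inj[of 2 0] L3 by auto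
      ultimately show ?thesis using 2 mem[of 2] mem[of 1] L3 by auto
    next
      case 3
      have "(vs!(L-1), vs!0) \<in> cpairs vs" using cp[of "L-1"] L3 by simp
      moreover have "vs!(L-1) \<noteq> vs!0" "vs!(L-1) \<noteq> vs!1" "vs!0 \<noteq> vs!1"
        using inj[of "L-1" 0] inj[of "L-1" 1] inj[of 0 1] L3 by auto
      ultimately show ?thesis using 3 mem[of "L-1"] mem[of 0] L3 by auto
    qed
  qed
  then show ?thesis using vs L3 L_def by blast
qed

lemma main_ind:
  "1 \<le> m \<Longrightarrow> m \<le> length xs \<Longrightarrow> \<exists>vs. distinct vs \<and> set vs = \<Union>(set (take m xs)) \<and> length vs \<ge> 3 \<and>
     (\<forall>pq\<in>cpairs vs. \<exists>l<m. fst pq \<in> xs!l \<and> snd pq \<in> xs!l) \<and>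
     (\<forall>x\<in>xs!(m-1). (m = 1 \<or> x \<in> xs!(m-2)) \<longrightarrow>
        (\<exists>p q. (p,q) \<in> cpairs vs \<and> p \<noteq> q \<and> p \<in> xs!(m-1) - {x} \<and> q \<in> xs!(m-1) - {x}))"
proof (induction m)
  case 0 then show ?case by simp
next
  case (Suc m)
  show ?case
  proof (cases "m = 0")
    case True
    have "0 < length xs" using Suc.prems by (metis Suc_le_lessD le_less_trans zero_le)
    then have X: "finite (xs!0)" "card (xs!0) = Suc d" using xcard[of 0] by auto
    obtain vs where vs: "distinct vs" "set vs = xs!0" "length vs \<ge> 3"
      "\<forall>x\<in>xs!0. \<exists>p q. (p,q) \<in> cpairs vs \<and> p \<noteq> q \<and> p \<in> xs!0 - {x} \<and> q \<in> xs!0 - {x}"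
      using base_cycle[OF X] by blast
    have t1: "take 1 xs = [xs!0]" using \<open>0 < length xs\<close> by (cases xs) auto
    have pairs: "\<forall>pq\<in>cpairs vs. \<exists>l<Suc 0. fst pq \<in> xs!l \<and> snd pq \<in> xs!l"
    proof
      fix pq assume "pq \<in> cpairs vs"
      then obtain j where j: "j < length vs" "pq = (vs!j, vs!(Suc j mod length vs))"
        unfolding cpairs_def by blast
      have "0 < length vs" using j(1) by linarith
      then have j2: "Suc j mod length vs < length vs" by (rule mod_less_divisor)
      have "fst pq \<in> set vs" "snd pq \<in> set vs" using j nth_mem[OF j(1)] nth_mem[OF j2] by auto
      then show "\<exists>l<Suc 0. fst pq \<in> xs!l \<and> snd pq \<in> xs!l" using vs(2) by (intro exI[of _ 0]) simp
    qed
    have U: "\<Union>(set (take (Suc 0) xs)) = xs!0" using t1 by simp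
    show ?thesis unfolding True
      apply (rule exI[of _ vs])
      using vs(1,2,3) vs(4) pairs U by simp
  next
    case False
    obtain vs where vs: "distinct vs" "set vs = \<Union>(set (take m xs))" "length vs \<ge> 3"
      "\<forall>pq\<in>cpairs vs. \<exists>l<m. fst pq \<in> xs!l \<and> snd pq \<in> xs!l"
      "\<forall>x\<in>xs!(m-1). (m = 1 \<or> x \<in> xs!(m-2)) \<longrightarrow>
        (\<exists>p q. (p,q) \<in> cpairs vs \<and> p \<noteq> q \<and> p \<in> xs!(m-1) - {x} \<and> q \<in> xs!(m-1) - {x})"
    proof -
      have "1 \<le> m" "m \<le> length xs" using Suc.prems False by auto
      from Suc.IH[OF this] show ?thesis using that by blast
    qed
    define X where "X = xs!(m-1)"
    define Y where "Y = xs!m"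
    have mlt: "m - 1 < length xs" "m < length xs" using Suc.prems by auto
    have cX: "finite X" "card X = Suc d" using xcard[OF mlt(1)] X_def by auto
    have cY: "finite Y" "card Y = Suc d" using xcard[OF mlt(2)] Y_def by auto
    have cXY: "card (X \<inter> Y) = d" using adj_iff[OF mlt] False X_def Y_def by auto
    obtain a b where ab: "a \<in> X" "b \<notin> X" "Y = insert b (X - {a})"
      using card_step[OF cX(1) cY(1) cX(2) cY(2) cXY] by blast
    have aY: "a \<notin> Y" using ab by auto
    have acond: "m = 1 \<or> a \<in> xs!(m-2)"
    proof (rule ccontr)
      assume "\<not> ?thesis"
      hence m2: "m \<ge> 2" "a \<notin> xs!(m-2)" using False by auto
      have mlt2: "m - 2 < length xs" using mlt by simp
      have c0: "finite (xs!(m-2))" "card (xs!(m-2)) = Suc d" using xcard[OF mlt2] by auto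
      have c01: "card (xs!(m-2) \<inter> X) = d" using adj_iff[OF mlt2 mlt(1)] m2 X_def by auto
      have ne: "xs!(m-2) \<noteq> Y" using x_inj[OF mlt2 mlt(2)] m2 Y_def by auto
      have "card (xs!(m-2) \<inter> Y) = d"
        using card_three[OF c0(1) cX(1) cY(1) c0(2) cX(2) cY(2) c01 cXY ne ab(1) m2(2) aY] .
      then have "m - 2 = Suc m \<or> m = Suc (m - 2)" using adj_iff[OF mlt2 mlt(2)] Y_def by auto
      then show False using m2 by auto
    qed
    have aX': "a \<in> xs!(m-1)" using ab(1) X_def by simp
    from vs(5)[rule_format, OF aX' acond] obtain u w where
      "(u,w) \<in> cpairs vs" "u \<noteq> w" "u \<in> xs!(m-1) - {a}" "w \<in> xs!(m-1) - {a}" by blast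
    then have uw: "(u,w) \<in> cpairs vs" "u \<noteq> w" "u \<in> X - {a}" "w \<in> X - {a}" using X_def by auto
    have bnew: "b \<notin> set vs"
    proof
      assume "b \<in> set vs"
      then obtain F where "F \<in> set (take m xs)" "b \<in> F" using vs(2) by auto
      then obtain l where l: "l < m" "b \<in> xs!l" using take_memD[of F m xs] by auto
      have "b \<in> xs!(m-1)" using vint[of l m b "m-1"] l mlt ab Y_def by auto
      then show False using ab X_def by simp
    qed
    obtain zs where zs: "distinct zs" "set zs = insert b (set vs)" "length zs = Suc (length vs)"
      "cpairs zs \<subseteq> cpairs vs \<union> {(u,b),(b,w)}" "(u,b) \<in> cpairs zs" "(b,w) \<in> cpairs zs"
      using cpairs_insert[OF uw(1) bnew vs(1)] by blast
    have tS: "take (Suc m) xs = take m xs @ [Y]" using mlt Y_def by (simp add: take_Suc_conv_app_nth)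
    have XU: "X \<subseteq> \<Union>(set (take m xs))" using take_mem[of "m-1" m xs] mlt False X_def by auto
    have set': "set zs = \<Union>(set (take (Suc m) xs))" using zs(2) vs(2) tS ab XU by auto
    have pairs': "\<forall>pq\<in>cpairs zs. \<exists>l<Suc m. fst pq \<in> xs!l \<and> snd pq \<in> xs!l"
    proof
      fix pq assume "pq \<in> cpairs zs"
      then have "pq \<in> cpairs vs \<or> pq = (u,b) \<or> pq = (b,w)" using zs(4) by auto
      then show "\<exists>l<Suc m. fst pq \<in> xs!l \<and> snd pq \<in> xs!l"
      proof (elim disjE)
        assume "pq \<in> cpairs vs"
        with vs(4) obtain l where "l < m" "fst pq \<in> xs!l" "snd pq \<in> xs!l" by blast
        then show ?thesis by (intro exI[of _ l]) auto
      next
        assume "pq = (u,b)" then show ?thesis using uw ab Y_def by (intro exI[of _ m]) auto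
      next
        assume "pq = (b,w)" then show ?thesis using uw ab Y_def by (intro exI[of _ m]) auto
      qed
    qed
    have inv': "\<exists>p q. (p,q) \<in> cpairs zs \<and> p \<noteq> q \<and> p \<in> Y - {x} \<and> q \<in> Y - {x}"
      if x: "x \<in> Y" "x \<in> X" for x
    proof (cases "x = u")
      case False
      then show ?thesis using zs(5) uw ab x by (intro exI[of _ u] exI[of _ b]) auto
    next
      case True
      then show ?thesis using zs(6) uw ab x by (intro exI[of _ b] exI[of _ w]) auto
    qed
    have "\<forall>x\<in>xs!(Suc m-1). (Suc m = 1 \<or> x \<in> xs!(Suc m-2)) \<longrightarrow>
        (\<exists>p q. (p,q) \<in> cpairs zs \<and> p \<noteq> q \<and> p \<in> xs!(Suc m-1) - {x} \<and> q \<in> xs!(Suc m-1) - {x})"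
      using inv' False X_def Y_def by auto
    then show ?thesis using zs(1,3) vs(3) set' pairs' by (intro exI[of _ zs]) auto
  qed
qed


lemma ham: "skeleton_hamiltonian K"
proof -
  have finK: "finite K" using sc unfolding simplicial_complex_def by blast
  have closed: "\<And>s t. s \<in> K \<Longrightarrow> t \<subseteq> s \<Longrightarrow> t \<noteq> {} \<Longrightarrow> t \<in> K"
    using sc unfolding simplicial_complex_def by blast
  obtain s0 where "s0 \<in> K" using pu unfolding pure_def by blast
  then obtain F0 where "F0 \<in> facets K" using below_facet[OF finK] by blast
  then have "xs \<noteq> []" using xs by auto
  then have n1: "1 \<le> length xs" by (cases xs) auto
  obtain vs where vs: "distinct vs" "set vs = \<Union>(set (take (length xs) xs))" "length vs \<ge> 3"
      "\<forall>pq\<in>cpairs vs. \<exists>l<length xs. fst pq \<in> xs!l \<and> snd pq \<in> xs!l"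
    using main_ind[OF n1 order_refl] by blast
  have fK: "facets K \<subseteq> K" unfolding facets_def by blast
  have sv: "skeleton_vertices K = \<Union>(facets K)"
  proof
    show "skeleton_vertices K \<subseteq> \<Union>(facets K)"
    proof
      fix v assume "v \<in> skeleton_vertices K"
      then have "{v} \<in> K" unfolding skeleton_vertices_def by simp
      then obtain F where "F \<in> facets K" "{v} \<subseteq> F" using below_facet[OF finK] by blast
      then show "v \<in> \<Union>(facets K)" by blast
    qed
  next
    show "\<Union>(facets K) \<subseteq> skeleton_vertices K"
    proof
      fix v assume "v \<in> \<Union>(facets K)"
      then obtain F where F: "F \<in> facets K" "v \<in> F" by blast
      then have "{v} \<in> K" using closed[of F "{v}"] fK by blast
      then show "v \<in> skeleton_vertices K" unfolding skeleton_vertices_def by simp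
    qed
  qed
  have setvs: "set vs = skeleton_vertices K" using vs(2) xs sv by simp
  have edges: "{vs ! i, vs ! ((i + 1) mod length vs)} \<in> K" if i: "i < length vs" for i
  proof -
    have "(vs!i, vs!(Suc i mod length vs)) \<in> cpairs vs" using cp_mem[OF i] .
    then obtain l where l: "l < length xs" "vs!i \<in> xs!l" "vs!(Suc i mod length vs) \<in> xs!l"
      using vs(4) by fastforce
    have "xs!l \<in> K" using l(1) xs fK nth_mem by blast
    then show ?thesis using closed[of "xs!l" "{vs ! i, vs ! ((i + 1) mod length vs)}"] l by simp
  qed
  show ?thesis unfolding skeleton_hamiltonian_def using vs(1,3) setvs edges by blast
qed

end

theorem mainTheorem5:
  fixes K :: "'a set set" and d :: nat
  assumes "d \<ge> 2"
    and "simplicial_complex K"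
    and "pure d K"
    and "shellable d K"
    and "dual_graph_is_path d K"
  shows "skeleton_hamiltonian K"
proof -
  have d1: "d \<ge> 1" using assms(1) by simp
  obtain ys where ys: "distinct ys" "set ys = facets K"
    "\<forall>k. 0 < k \<and> k < length ys \<longrightarrow> (\<exists>j<k. card (ys!j \<inter> ys!k) = d)"
    "\<forall>k j. 0 < k \<and> k < length ys \<and> j < k \<and> ys!j \<inter> ys!k \<noteq> {} \<longrightarrow>
        (\<exists>j'<k. ys!j \<inter> ys!k \<subseteq> ys!j' \<and> card (ys!j' \<inter> ys!k) = d)"
    using shell_props[OF d1 assms(2) assms(4)] by blast
  obtain xs where xs: "distinct xs" "set xs = facets K"
     "\<forall>i j. i < length xs \<and> j < length xs \<longrightarrow>
        (dual_adj d (xs ! i) (xs ! j) \<longleftrightarrow> (i = Suc j \<or> j = Suc i))"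
    using assms(5) unfolding dual_graph_is_path_def by blast
  show ?thesis using ham[OF assms(1,2,3) xs ys] .
qed

end
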